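(* If $p:X\to Y$ is a covering map with finite fibers and $X$ is paracompact (Hausdorff), then $p$ is an overlay.
   Context: A covering map $p:X\to Y$ is a continuous surjection such that every point of $Y$ has an open neighborhood $V$ with $p^{-1}(V)$ a disjoint union of open sets each mapped homeomorphically onto $V$. For a continuous map $p:X\to Y$: a slice of $p$ is an open set $U\subseteq X$ such that $p^{-1}(p(U))$ is the disjoint union of a family of open sets $U_s$ ($s\in S$), each mapped by $p$ homeomorphically onto $p(U)$, with $U=U_t$ for some $t\in S$. A covering structure of $p$ is an open cover $\mathcal S$ of $X$ by slices of $p$ such that for every $U\in\mathcal S$, $p^{-1}(p(U))$ is the disjoint union of a family $\{U_j\}_{j\in J}$ of elements of $\mathcal S$, each mapped homeomorphically onto $p(U)$. For a cover $\mathcal S$ and $x\in X$, $st(x,\mathcal S)=\bigcup\{U\in\mathcal S: x\in U\}$. An overlay structure of $p$ is a covering structure $\mathcal S$ such that $st(x,\mathcal S)$ is a slice of $p$ for every $x\in X$. The map $p$ is an overlay if it has an overlay structure. *)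

theory Defs
  imports "HOL-Analysis.Analysis"
begin

definition covering_map :: "'a topology \<Rightarrow> 'b topology \<Rightarrow> ('a \<Rightarrow> 'b) \<Rightarrow> bool" where
  "covering_map X Y p \<longleftrightarrow>
     continuous_map X Y p \<and> p ` topspace X = topspace Y \<and>
     (\<forall>y \<in> topspace Y. \<exists>V. openin Y V \<and> y \<in> V \<and>
        (\<exists>\<U>. \<Union>\<U> = {x \<in> topspace X. p x \<in> V} \<and> pairwise disjnt \<U> \<and>
             (\<forall>U \<in> \<U>. openin X U \<and> homeomorphic_map (subtopology X U) (subtopology Y V) p)))"

definition slice :: "'a topology \<Rightarrow> 'b topology \<Rightarrow> ('a \<Rightarrow> 'b) \<Rightarrow> 'a set \<Rightarrow> bool" where
  "slice X Y p U \<longleftrightarrow>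
     openin X U \<and>
     (\<exists>\<U>. U \<in> \<U> \<and> \<Union>\<U> = {x \<in> topspace X. p x \<in> p ` U} \<and> pairwise disjnt \<U> \<and>
          (\<forall>W \<in> \<U>. openin X W \<and> homeomorphic_map (subtopology X W) (subtopology Y (p ` U)) p))"

definition covering_structure :: "'a topology \<Rightarrow> 'b topology \<Rightarrow> ('a \<Rightarrow> 'b) \<Rightarrow> 'a set set \<Rightarrow> bool" where
  "covering_structure X Y p \<S> \<longleftrightarrow>
     \<Union>\<S> = topspace X \<and> (\<forall>U \<in> \<S>. slice X Y p U) \<and>
     (\<forall>U \<in> \<S>. \<exists>\<U>. \<U> \<subseteq> \<S> \<and> \<Union>\<U> = {x \<in> topspace X. p x \<in> p ` U} \<and> pairwise disjnt \<U> \<and>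
          (\<forall>W \<in> \<U>. homeomorphic_map (subtopology X W) (subtopology Y (p ` U)) p))"

definition star :: "'a \<Rightarrow> 'a set set \<Rightarrow> 'a set" where
  "star x \<S> = \<Union>{U \<in> \<S>. x \<in> U}"

definition overlay_structure :: "'a topology \<Rightarrow> 'b topology \<Rightarrow> ('a \<Rightarrow> 'b) \<Rightarrow> 'a set set \<Rightarrow> bool" where
  "overlay_structure X Y p \<S> \<longleftrightarrow>
     covering_structure X Y p \<S> \<and> (\<forall>x \<in> topspace X. slice X Y p (star x \<S>))"

definition overlay :: "'a topology \<Rightarrow> 'b topology \<Rightarrow> ('a \<Rightarrow> 'b) \<Rightarrow> bool" where
  "overlay X Y p \<longleftrightarrow> (\<exists>\<S>. overlay_structure X Y p \<S>)"

definition paracompact_space :: "'a topology \<Rightarrow> bool" where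
  "paracompact_space X \<longleftrightarrow>
     Hausdorff_space X \<and>
     (\<forall>\<C>. (\<forall>C \<in> \<C>. openin X C) \<and> \<Union>\<C> = topspace X \<longrightarrow>
        (\<exists>\<D>. (\<forall>D \<in> \<D>. openin X D) \<and> \<Union>\<D> = topspace X \<and>
             (\<forall>D \<in> \<D>. \<exists>C \<in> \<C>. D \<subseteq> C) \<and> locally_finite_in X \<D>))"

end

theory Submission
  imports Defs
begin

lemma sheet_lemma:
  assumes U: "openin X U" and V: "openin Y V"
    and h: "homeomorphic_map (subtopology X U) (subtopology Y V) p"
    and AU: "A \<subseteq> U" and A: "openin X A"
  shows "openin Y (p ` A)" "homeomorphic_map (subtopology X A) (subtopology Y (p ` A)) p"
    "inj_on p U" "p ` U = V"
proof -
  have tU: "topspace (subtopology X U) = U" using U openin_subset by auto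
  have tV: "topspace (subtopology Y V) = V" using V openin_subset by auto
  have im: "p ` U = V" using h tU tV by (metis homeomorphic_imp_surjective_map)
  then show "p ` U = V" .
  show "inj_on p U" using h tU by (metis homeomorphic_imp_injective_map)
  have "openin (subtopology X U) A" using U A AU by (simp add: openin_open_subtopology)
  then have "openin (subtopology Y V) (p ` A)"
    using h homeomorphic_map_openness_eq by blast
  then show "openin Y (p ` A)" using V by (simp add: openin_open_subtopology)
  have "homeomorphic_map (subtopology (subtopology X U) A) (subtopology (subtopology Y V) (p ` A)) p"
    by (rule homeomorphic_map_subtopologies[OF h]) (use tU tV im AU in auto)
  moreover have "subtopology (subtopology X U) A = subtopology X A"
    using AU by (simp add: subtopology_subtopology Int_absorb1)
  moreover have "subtopology (subtopology Y V) (p ` A) = subtopology Y (p ` A)"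
  proof -
    have "V \<inter> p ` A = p ` A" using AU im by blast
    then show ?thesis by (simp add: subtopology_subtopology)
  qed
  ultimately show "homeomorphic_map (subtopology X A) (subtopology Y (p ` A)) p" by simp
qed

lemma slice_sub:
  assumes cont: "continuous_map X Y p" and V: "openin Y V"
    and cov: "\<Union>\<U> = {x \<in> topspace X. p x \<in> V}" and disj: "pairwise disjnt \<U>"
    and sh: "\<forall>U\<in>\<U>. openin X U \<and> homeomorphic_map (subtopology X U) (subtopology Y V) p"
    and U0: "U0 \<in> \<U>" and AU: "A \<subseteq> U0" and A: "openin X A"
  shows "slice X Y p A"
proof -
  define B where "B = p ` A"
  have U0o: "openin X U0" and h0: "homeomorphic_map (subtopology X U0) (subtopology Y V) p"
    using sh U0 by auto
  note L0 = sheet_lemma[OF U0o V h0 AU A]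
  have Bo: "openin Y B" using L0 B_def by simp
  have BV: "B \<subseteq> V" using L0 AU B_def by blast
  define \<A> where "\<A> = (\<lambda>W. {x \<in> W. p x \<in> B}) ` \<U>"
  have AinA: "A \<in> \<A>"
  proof -
    have "A = {x \<in> U0. p x \<in> B}" using L0(3) AU B_def by (auto simp: inj_on_def)
    then show ?thesis using U0 \<A>_def by blast
  qed
  have Un: "\<Union>\<A> = {x \<in> topspace X. p x \<in> p ` A}"
  proof
    show "\<Union>\<A> \<subseteq> {x \<in> topspace X. p x \<in> p ` A}"
      using sh openin_subset B_def unfolding \<A>_def by fastforce
    show "{x \<in> topspace X. p x \<in> p ` A} \<subseteq> \<Union>\<A>"
    proof
      fix x assume x: "x \<in> {x \<in> topspace X. p x \<in> p ` A}"
      then have "x \<in> \<Union>\<U>" using cov BV B_def by auto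
      then obtain W where "W \<in> \<U>" "x \<in> W" by auto
      then show "x \<in> \<Union>\<A>" using x B_def unfolding \<A>_def by blast
    qed
  qed
  have pd: "pairwise disjnt \<A>"
    using disj unfolding \<A>_def pairwise_def disjnt_def by blast
  have each: "\<forall>W\<in>\<A>. openin X W \<and> homeomorphic_map (subtopology X W) (subtopology Y (p ` A)) p"
  proof
    fix W' assume "W' \<in> \<A>"
    then obtain W where W: "W \<in> \<U>" and W': "W' = {x \<in> W. p x \<in> B}" unfolding \<A>_def by auto
    have Wo: "openin X W" and hW: "homeomorphic_map (subtopology X W) (subtopology Y V) p"
      using sh W by auto
    have "W' = W \<inter> {x \<in> topspace X. p x \<in> B}" using W' Wo openin_subset by auto
    then have W'o: "openin X W'" using Wo Bo cont
      by (simp add: openin_Int openin_continuous_map_preimage)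
    note L = sheet_lemma[OF Wo V hW _ W'o]
    have "p ` W' = B" using L(4) BV W' by auto
    then show "openin X W' \<and> homeomorphic_map (subtopology X W') (subtopology Y (p ` A)) p"
      using W'o L(2) W' B_def by auto
  qed
  show ?thesis unfolding slice_def using A AinA Un pd each by blast
qed

lemma hausdorff_sep:
  "Hausdorff_space X \<Longrightarrow> a \<in> topspace X \<Longrightarrow> b \<in> topspace X \<Longrightarrow> a \<noteq> b
   \<Longrightarrow> \<exists>U V. openin X U \<and> openin X V \<and> a \<in> U \<and> b \<in> V \<and> disjnt U V"
  by (simp add: Hausdorff_space_def)

lemma para_refine:
  assumes "paracompact_space X" "\<forall>C\<in>\<C>. openin X C" "\<Union>\<C> = topspace X"
  shows "\<exists>\<D>. (\<forall>D \<in> \<D>. openin X D) \<and> \<Union>\<D> = topspace X \<and>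
             (\<forall>D \<in> \<D>. \<exists>C \<in> \<C>. D \<subseteq> C) \<and> locally_finite_in X \<D>"
proof -
  have "(\<forall>C \<in> \<C>. openin X C) \<and> \<Union>\<C> = topspace X \<longrightarrow>
        (\<exists>\<D>. (\<forall>D \<in> \<D>. openin X D) \<and> \<Union>\<D> = topspace X \<and>
             (\<forall>D \<in> \<D>. \<exists>C \<in> \<C>. D \<subseteq> C) \<and> locally_finite_in X \<D>)"
    using assms(1)[unfolded paracompact_space_def, THEN conjunct2, THEN spec[of _ \<C>]] .
  then show ?thesis using assms(2,3) by blast
qed

lemma para_regular:
  assumes para: "paracompact_space X" and Op: "openin X Op" and x: "x \<in> Op"
  shows "\<exists>N. openin X N \<and> x \<in> N \<and> X closure_of N \<subseteq> Op"
proof -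
  have H: "Hausdorff_space X" using para[unfolded paracompact_space_def, THEN conjunct1] .
  have xX: "x \<in> topspace X" using Op x openin_subset by blast
  define \<C> where "\<C> = insert Op {P. openin X P \<and> x \<notin> X closure_of P}"
  have Co: "\<forall>C\<in>\<C>. openin X C" unfolding \<C>_def using Op by auto
  have Cu: "\<Union>\<C> = topspace X"
  proof
    show "\<Union>\<C> \<subseteq> topspace X" using Co openin_subset by blast
    show "topspace X \<subseteq> \<Union>\<C>"
    proof
      fix c assume c: "c \<in> topspace X"
      show "c \<in> \<Union>\<C>"
      proof (cases "c \<in> Op")
        case True then show ?thesis unfolding \<C>_def by blast
      next
        case False
        then have "c \<noteq> x" using x by auto
        obtain P Q where PQ: "openin X P" "openin X Q" "c \<in> P" "x \<in> Q" "disjnt P Q"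
          using hausdorff_sep[OF H c xX \<open>c \<noteq> x\<close>] by blast
        have "x \<notin> X closure_of P"
          using PQ(2,4,5) by (metis disjnt_iff in_closure_of)
        then show ?thesis using PQ unfolding \<C>_def by blast
      qed
    qed
  qed
  obtain \<D> where Do: "\<forall>D\<in>\<D>. openin X D" and Du: "\<Union>\<D> = topspace X"
    and Dr: "\<forall>D\<in>\<D>. \<exists>C\<in>\<C>. D \<subseteq> C" and Dl: "locally_finite_in X \<D>"
    using para_refine[OF para Co Cu] by blast
  define \<E> where "\<E> = {D \<in> \<D>. \<not> D \<subseteq> Op}"
  have El: "locally_finite_in X \<E>" by (rule locally_finite_in_subset[OF Dl]) (auto simp: \<E>_def)
  have cE: "X closure_of (\<Union>\<E>) = \<Union>((\<lambda>S. X closure_of S) ` \<E>)"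
    using closure_of_locally_finite_Union[OF El] .
  have xn: "x \<notin> X closure_of (\<Union>\<E>)"
  proof
    assume "x \<in> X closure_of (\<Union>\<E>)"
    then obtain D where D: "D \<in> \<E>" "x \<in> X closure_of D" using cE by auto
    have DD: "D \<in> \<D>" "\<not> D \<subseteq> Op" using D(1) by (simp_all add: \<E>_def)
    then obtain C where C: "C \<in> \<C>" "D \<subseteq> C" using Dr by blast
    have "C \<noteq> Op" using C DD by auto
    then have "x \<notin> X closure_of C" using C by (simp add: \<C>_def)
    moreover have "X closure_of D \<subseteq> X closure_of C" using C closure_of_mono by blast
    ultimately show False using D by blast
  qed
  define N where "N = topspace X - X closure_of (\<Union>\<E>)"
  have No: "openin X N" unfolding N_def by (simp add: openin_diff)
  have xN: "x \<in> N" using xX xn N_def by auto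
  have Eo: "openin X (\<Union>\<E>)" by (rule openin_Union) (simp add: \<E>_def Do)
  have "N \<subseteq> topspace X - \<Union>\<E>" using closure_of_subset[OF openin_subset[OF Eo]] by (auto simp: N_def)
  moreover have "closedin X (topspace X - \<Union>\<E>)" using Eo by (simp add: closedin_diff)
  ultimately have "X closure_of N \<subseteq> topspace X - \<Union>\<E>" by (simp add: closure_of_minimal)
  moreover have "topspace X - \<Union>\<E> \<subseteq> Op"
  proof
    fix c assume c: "c \<in> topspace X - \<Union>\<E>"
    then obtain D where "D \<in> \<D>" "c \<in> D" using Du by blast
    then show "c \<in> Op" using c by (auto simp: \<E>_def)
  qed
  ultimately have "X closure_of N \<subseteq> Op" by (rule order_trans)
  then show ?thesis using No xN by (intro exI[of _ N] conjI)
qed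

definition goodset :: "'a topology \<Rightarrow> 'b topology \<Rightarrow> ('a \<Rightarrow> 'b) \<Rightarrow> 'a set \<Rightarrow> bool" where
  "goodset X Y p Op \<longleftrightarrow> openin X Op \<and> (\<exists>V \<U> U. openin Y V \<and> \<Union>\<U> = {x \<in> topspace X. p x \<in> V} \<and>
     pairwise disjnt \<U> \<and> (\<forall>U\<in>\<U>. openin X U \<and> homeomorphic_map (subtopology X U) (subtopology Y V) p) \<and>
     U \<in> \<U> \<and> Op \<subseteq> U)"

lemma goodset_open: "goodset X Y p Op \<Longrightarrow> openin X Op"
  unfolding goodset_def by blast

lemma goodset_props:
  assumes cont: "continuous_map X Y p" and g: "goodset X Y p Op" and AO: "A \<subseteq> Op" and A: "openin X A"
  shows "slice X Y p A" "openin Y (p ` A)" "homeomorphic_map (subtopology X A) (subtopology Y (p ` A)) p"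
    "inj_on p Op"
proof -
  obtain V \<U> U where V: "openin Y V" and cov: "\<Union>\<U> = {x \<in> topspace X. p x \<in> V}"
    and disj: "pairwise disjnt \<U>"
    and sh: "\<forall>U\<in>\<U>. openin X U \<and> homeomorphic_map (subtopology X U) (subtopology Y V) p"
    and U: "U \<in> \<U>" and OU: "Op \<subseteq> U"
    using g unfolding goodset_def by blast
  have AU: "A \<subseteq> U" using AO OU by (rule order_trans)
  show "slice X Y p A" using slice_sub[OF cont V cov disj sh U AU A] .
  have Uo: "openin X U" and h: "homeomorphic_map (subtopology X U) (subtopology Y V) p" using sh U by auto
  note L = sheet_lemma[OF Uo V h AU A]
  show "openin Y (p ` A)" using L(1) .
  show "homeomorphic_map (subtopology X A) (subtopology Y (p ` A)) p" using L(2) .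
  show "inj_on p Op" using L(3) OU inj_on_subset by blast
qed

lemma goodset_exists:
  assumes cov: "covering_map X Y p" and x: "x \<in> topspace X"
  shows "\<exists>Op. goodset X Y p Op \<and> x \<in> Op"
proof -
  have cont: "continuous_map X Y p" using cov[unfolded covering_map_def, THEN conjunct1] .
  have "p x \<in> topspace Y" using cont x continuous_map_image_subset_topspace by blast
  then obtain V \<U> where V: "openin Y V" "p x \<in> V" and cu: "\<Union>\<U> = {x \<in> topspace X. p x \<in> V}"
    and disj: "pairwise disjnt \<U>"
    and sh: "\<forall>U\<in>\<U>. openin X U \<and> homeomorphic_map (subtopology X U) (subtopology Y V) p"
    using cov unfolding covering_map_def by meson
  have "x \<in> \<Union>\<U>" using cu x V by auto
  then obtain U where U: "U \<in> \<U>" "x \<in> U" by auto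
  have "goodset X Y p U" unfolding goodset_def using U sh V cu disj by blast
  then show ?thesis using U by blast
qed

lemma star_refine:
  assumes para: "paracompact_space X"
    and cov: "\<forall>x\<in>topspace X. \<exists>Op. P Op \<and> openin X Op \<and> x \<in> Op"
  shows "\<exists>G. (\<forall>x\<in>topspace X. openin X (G x) \<and> x \<in> G x) \<and>
             (\<forall>z\<in>topspace X. \<exists>Op. P Op \<and> (\<forall>x\<in>topspace X. z \<in> G x \<longrightarrow> G x \<subseteq> Op))"
proof -
  define \<C> where "\<C> = {N. openin X N \<and> (\<exists>Op. P Op \<and> openin X Op \<and> X closure_of N \<subseteq> Op)}"
  have Co: "\<forall>C\<in>\<C>. openin X C" unfolding \<C>_def by auto
  have Cu: "\<Union>\<C> = topspace X"
  proof
    show "\<Union>\<C> \<subseteq> topspace X" using Co openin_subset by blast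
    show "topspace X \<subseteq> \<Union>\<C>"
    proof
      fix x assume x: "x \<in> topspace X"
      then obtain Op where Op: "P Op" "openin X Op" "x \<in> Op" using cov by blast
      then obtain N where N: "openin X N" "x \<in> N" "X closure_of N \<subseteq> Op"
        using para_regular[OF para] by meson
      have "N \<in> \<C>" unfolding \<C>_def using N Op by blast
      then show "x \<in> \<Union>\<C>" using N by blast
    qed
  qed
  obtain \<D> where Do: "\<forall>D\<in>\<D>. openin X D" and Du: "\<Union>\<D> = topspace X"
    and Dr: "\<forall>D\<in>\<D>. \<exists>C\<in>\<C>. D \<subseteq> C" and Dl: "locally_finite_in X \<D>"
    using para_refine[OF para Co Cu] by blast
  have "\<forall>D\<in>\<D>. \<exists>Op. P Op \<and> openin X Op \<and> X closure_of D \<subseteq> Op"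
  proof
    fix D assume "D \<in> \<D>"
    then obtain C where C: "C \<in> \<C>" "D \<subseteq> C" using Dr by blast
    then obtain Op where Op: "P Op" "openin X Op" "X closure_of C \<subseteq> Op" unfolding \<C>_def by blast
    have "X closure_of D \<subseteq> X closure_of C" using C closure_of_mono by blast
    then show "\<exists>Op. P Op \<and> openin X Op \<and> X closure_of D \<subseteq> Op" using Op by blast
  qed
  then obtain Ob where Ob: "\<forall>D\<in>\<D>. P (Ob D) \<and> openin X (Ob D) \<and> X closure_of D \<subseteq> Ob D"
    by (rule bchoice[elim_format]) (erule exE, erule that)
  define F where "F x = {D \<in> \<D>. x \<in> X closure_of D}" for x
  define K where "K x = \<Union>((\<lambda>S. X closure_of S) ` {D \<in> \<D>. x \<notin> X closure_of D})" for x
  define G where "G x = (topspace X \<inter> \<Inter>(Ob ` F x)) - K x" for x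
  have finF: "finite (F x)" if x: "x \<in> topspace X" for x
  proof -
    obtain V where V: "openin X V" "x \<in> V" and fin: "finite {U \<in> \<D>. U \<inter> V \<noteq> {}}"
      using Dl x unfolding locally_finite_in_def by blast
    have "F x \<subseteq> {U \<in> \<D>. U \<inter> V \<noteq> {}}"
    proof
      fix D assume "D \<in> F x"
      then have D: "D \<in> \<D>" "x \<in> X closure_of D" unfolding F_def by auto
      then have "V \<inter> X closure_of D \<noteq> {}" using V by blast
      then have "V \<inter> D \<noteq> {}" using openin_Int_closure_of_eq_empty[OF V(1)] by blast
      then show "D \<in> {U \<in> \<D>. U \<inter> V \<noteq> {}}" using D by blast
    qed
    then show ?thesis using fin finite_subset by blast
  qed
  have Gopen: "openin X (G x)" if x: "x \<in> topspace X" for x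
  proof -
    have "openin X (topspace X \<inter> \<Inter>(Ob ` F x))"
      by (rule openin_Int_Inter) (use finF[OF x] Ob in \<open>auto simp: F_def\<close>)
    moreover have "closedin X (K x)" unfolding K_def
      by (rule closedin_Union_locally_finite_closure) (rule locally_finite_in_subset[OF Dl], blast)
    ultimately show ?thesis unfolding G_def by (rule openin_diff)
  qed
  have Gx: "x \<in> G x" if x: "x \<in> topspace X" for x
  proof -
    have "\<forall>D\<in>F x. x \<in> Ob D" using Ob unfolding F_def by blast
    moreover have "x \<notin> K x" unfolding K_def by blast
    ultimately show ?thesis unfolding G_def using x by blast
  qed
  have star: "\<exists>Op. P Op \<and> (\<forall>x\<in>topspace X. z \<in> G x \<longrightarrow> G x \<subseteq> Op)" if z: "z \<in> topspace X" for z
  proof -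
    obtain D0 where D0: "D0 \<in> \<D>" "z \<in> D0" using Du z by blast
    have D0c: "D0 \<subseteq> X closure_of D0" using closure_of_subset Do D0(1) openin_subset by metis
    have "G x \<subseteq> Ob D0" if x: "x \<in> topspace X" and zG: "z \<in> G x" for x
    proof -
      have "D0 \<in> F x"
      proof (rule ccontr)
        assume "D0 \<notin> F x"
        then have "X closure_of D0 \<subseteq> K x" unfolding F_def K_def using D0 by blast
        then have "z \<in> K x" using D0c D0 by blast
        then show False using zG unfolding G_def by blast
      qed
      then show ?thesis unfolding G_def by blast
    qed
    then show ?thesis using Ob D0 by blast
  qed
  show ?thesis
    by (rule exI[of _ G]) (use Gopen Gx star in blast)
qed

theorem corollary4p11:
  fixes X :: "'a topology" and Y :: "'b topology" and p :: "'a \<Rightarrow> 'b"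
  assumes "covering_map X Y p"
    and "\<forall>y \<in> topspace Y. finite {x \<in> topspace X. p x = y}"
    and "paracompact_space X"
  shows "overlay X Y p"
proof -
  note cov = assms(1) and finfib = assms(2) and para = assms(3)
  have cont: "continuous_map X Y p" using cov[unfolded covering_map_def, THEN conjunct1] .
  have pY: "p x \<in> topspace Y" if "x \<in> topspace X" for x
    using cont that continuous_map_image_subset_topspace by blast
  have "\<forall>x\<in>topspace X. \<exists>Op. goodset X Y p Op \<and> openin X Op \<and> x \<in> Op"
    using goodset_exists[OF cov] goodset_open by blast
  from star_refine[OF para this] obtain G where Gx: "\<forall>x\<in>topspace X. openin X (G x) \<and> x \<in> G x"
    and Gs: "\<forall>z\<in>topspace X. \<exists>Op. goodset X Y p Op \<and> (\<forall>x\<in>topspace X. z \<in> G x \<longrightarrow> G x \<subseteq> Op)"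
    by blast
  have GX: "G x \<subseteq> topspace X" if "x \<in> topspace X" for x using Gx that openin_subset by blast
  have Ggood: "\<exists>Op. goodset X Y p Op \<and> G x \<subseteq> Op" if x: "x \<in> topspace X" for x
    using Gs Gx x by blast
  have Gimg: "openin Y (p ` G x)" if x: "x \<in> topspace X" for x
  proof -
    obtain Op where "goodset X Y p Op" "G x \<subseteq> Op" using Ggood x by blast
    then show ?thesis using goodset_props(2)[OF cont] Gx x by blast
  qed
  have Ginj: "x1 = x2" if "x1 \<in> topspace X" "x2 \<in> topspace X" "p x1 = p x2" "z \<in> G x1" "z \<in> G x2"
    for x1 x2 z
  proof -
    have z: "z \<in> topspace X" using that GX by blast
    obtain Op where Op: "goodset X Y p Op" "\<forall>x\<in>topspace X. z \<in> G x \<longrightarrow> G x \<subseteq> Op"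
      using Gs z by blast
    have "x1 \<in> Op" "x2 \<in> Op" using Op(2) that Gx by blast+
    moreover have "inj_on p Op" using goodset_props(4)[OF cont Op(1)] by blast
    ultimately show ?thesis using that(3) by (auto simp: inj_on_def)
  qed
  define Fib where "Fib y = {x \<in> topspace X. p x = y}" for y
  have "\<forall>y\<in>topspace Y. \<exists>V. openin Y V \<and> y \<in> V \<and>
        (\<exists>\<U>. \<Union>\<U> = {x \<in> topspace X. p x \<in> V} \<and> pairwise disjnt \<U> \<and>
             (\<forall>U \<in> \<U>. openin X U \<and> homeomorphic_map (subtopology X U) (subtopology Y V) p))"
    using cov unfolding covering_map_def by blast
  then obtain Vc where Vc: "\<forall>y\<in>topspace Y. openin Y (Vc y) \<and> y \<in> Vc y \<and>
        (\<exists>\<U>. \<Union>\<U> = {x \<in> topspace X. p x \<in> Vc y} \<and> pairwise disjnt \<U> \<and>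
             (\<forall>U \<in> \<U>. openin X U \<and> homeomorphic_map (subtopology X U) (subtopology Y (Vc y)) p))"
    by (rule bchoice[elim_format]) (erule exE, erule that)
  define W where "W y = (topspace Y \<inter> Vc y) \<inter> \<Inter>((\<lambda>x'. p ` G x') ` Fib y)" for y
  have Wopen: "openin Y (W y)" if y: "y \<in> topspace Y" for y
    unfolding W_def
  proof (rule openin_Int_Inter)
    show "finite ((\<lambda>x'. p ` G x') ` Fib y)" using finfib y Fib_def by simp
    show "openin Y (topspace Y \<inter> Vc y)" using Vc y by blast
    show "\<And>Z. Z \<in> (\<lambda>x'. p ` G x') ` Fib y \<Longrightarrow> openin Y Z" using Gimg Fib_def by auto
  qed
  define A where "A x = {z \<in> G x. p z \<in> W (p x)}" for x
  define S where "S = A ` topspace X"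
  have AX: "A x \<subseteq> G x" for x unfolding A_def by blast
  have xA: "x \<in> A x" if x: "x \<in> topspace X" for x
  proof -
    have "p x \<in> topspace Y \<inter> Vc (p x)" using Vc pY x by blast
    moreover have "p x \<in> p ` G x'" if "x' \<in> Fib (p x)" for x'
    proof -
      have "x' \<in> topspace X" "p x' = p x" using that unfolding Fib_def by auto
      then show ?thesis using Gx by (metis imageI)
    qed
    ultimately show ?thesis unfolding A_def W_def using Gx x by blast
  qed
  have Aopen: "openin X (A x)" if x: "x \<in> topspace X" for x
  proof -
    have "A x = G x \<inter> {z \<in> topspace X. p z \<in> W (p x)}" unfolding A_def using GX x by blast
    then show ?thesis using Gx x Wopen pY openin_continuous_map_preimage[OF cont]
      by (metis openin_Int)
  qed
  have Aimg: "p ` A x' = W y" if x': "x' \<in> Fib y" for x' y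
  proof
    have px': "p x' = y" "x' \<in> topspace X" using x' Fib_def by auto
    show "p ` A x' \<subseteq> W y" unfolding A_def using px' by auto
    show "W y \<subseteq> p ` A x'"
    proof
      fix w assume w: "w \<in> W y"
      then have "w \<in> p ` G x'" unfolding W_def using x' by blast
      then obtain z where "z \<in> G x'" "p z = w" by blast
      then show "w \<in> p ` A x'" unfolding A_def using px' w by blast
    qed
  qed
  have Aprops: "slice X Y p (A x) \<and> homeomorphic_map (subtopology X (A x)) (subtopology Y (p ` A x)) p"
    if x: "x \<in> topspace X" for x
  proof -
    obtain Op where Op: "goodset X Y p Op" "G x \<subseteq> Op" using Ggood x by blast
    have "A x \<subseteq> Op" using AX Op(2) by blast
    then show ?thesis using goodset_props[OF cont Op(1) _ Aopen[OF x]] by blast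
  qed
  have starslice: "slice X Y p (star z S)" if z: "z \<in> topspace X" for z
  proof -
    obtain Op where Op: "goodset X Y p Op" "\<forall>x\<in>topspace X. z \<in> G x \<longrightarrow> G x \<subseteq> Op"
      using Gs z by blast
    have sub: "star z S \<subseteq> Op"
    proof
      fix u assume "u \<in> star z S"
      then obtain x where x: "x \<in> topspace X" "z \<in> A x" "u \<in> A x"
        unfolding star_def S_def by blast
      then show "u \<in> Op" using Op(2) AX by blast
    qed
    have "openin X (star z S)" unfolding star_def S_def
      by (rule openin_Union) (use Aopen in blast)
    then show ?thesis using goodset_props(1)[OF cont Op(1) sub] by blast
  qed
  have partition: "\<exists>\<U>. \<U> \<subseteq> S \<and> \<Union>\<U> = {z \<in> topspace X. p z \<in> p ` U} \<and> pairwise disjnt \<U> \<and>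
          (\<forall>W \<in> \<U>. homeomorphic_map (subtopology X W) (subtopology Y (p ` U)) p)"
    if U: "U \<in> S" for U
  proof -
    obtain x where x: "x \<in> topspace X" and Ux: "U = A x" using U unfolding S_def by blast
    define y where "y = p x"
    have xF: "x \<in> Fib y" unfolding Fib_def y_def using x by simp
    have pU: "p ` U = W y" using Aimg[OF xF] Ux by simp
    have y: "y \<in> topspace Y" using pY x y_def by simp
    have WY: "W y \<subseteq> topspace Y \<inter> Vc y" unfolding W_def by blast
    have finy: "finite (Fib y)" using finfib y Fib_def by simp
    have covers: "{z \<in> topspace X. p z \<in> W y} \<subseteq> \<Union>(A ` Fib y)"
    proof
      fix z assume z: "z \<in> {z \<in> topspace X. p z \<in> W y}"
      define w where "w = p z"
      have wW: "w \<in> W y" using z w_def by simp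
      have wY: "w \<in> topspace Y" using wW WY by blast
      have finw: "finite (Fib w)" using finfib wY Fib_def by simp
      have "\<forall>x'\<in>Fib y. \<exists>z'. z' \<in> G x' \<and> p z' = w"
      proof
        fix x' assume "x' \<in> Fib y"
        then have "w \<in> p ` G x'" using wW unfolding W_def by blast
        then show "\<exists>z'. z' \<in> G x' \<and> p z' = w" by blast
      qed
      then obtain \<sigma> where \<sigma>: "\<forall>x'\<in>Fib y. \<sigma> x' \<in> G x' \<and> p (\<sigma> x') = w"
        by (rule bchoice[elim_format]) (erule exE, erule that)
      have \<sigma>inj: "inj_on \<sigma> (Fib y)"
      proof (rule inj_onI)
        fix x1 x2 assume h: "x1 \<in> Fib y" "x2 \<in> Fib y" "\<sigma> x1 = \<sigma> x2"
        have a: "x1 \<in> topspace X" "x2 \<in> topspace X" "p x1 = p x2" using h(1,2) unfolding Fib_def by auto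
        have b: "\<sigma> x1 \<in> G x1" "\<sigma> x2 \<in> G x2" using \<sigma> h(1,2) by auto
        show "x1 = x2" using Ginj[OF a] b h(3) by simp
      qed
      have \<sigma>img: "\<sigma> ` Fib y \<subseteq> Fib w" using \<sigma> GX unfolding Fib_def by blast
      obtain \<U> where cu: "\<Union>\<U> = {x \<in> topspace X. p x \<in> Vc y}" and disj: "pairwise disjnt \<U>"
        and sh: "\<forall>U \<in> \<U>. openin X U \<and> homeomorphic_map (subtopology X U) (subtopology Y (Vc y)) p"
        using Vc y by meson
      have Vco: "openin Y (Vc y)" and yV: "y \<in> Vc y" using Vc y by auto
      have "\<forall>z'\<in>Fib w. \<exists>U x'. U \<in> \<U> \<and> z' \<in> U \<and> x' \<in> U \<and> p x' = y"
      proof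
        fix z' assume z': "z' \<in> Fib w"
        then have "z' \<in> \<Union>\<U>" using cu wW WY unfolding Fib_def by auto
        then obtain U where U: "U \<in> \<U>" "z' \<in> U" by blast
        have "p ` U = Vc y" using sheet_lemma(4)[OF _ Vco _ order_refl] sh U by blast
        then obtain x' where "x' \<in> U" "p x' = y" using yV by (metis imageE)
        then show "\<exists>U x'. U \<in> \<U> \<and> z' \<in> U \<and> x' \<in> U \<and> p x' = y" using U by blast
      qed
      then obtain Uf \<tau> where Uf: "\<forall>z'\<in>Fib w. Uf z' \<in> \<U> \<and> z' \<in> Uf z' \<and> \<tau> z' \<in> Uf z' \<and> p (\<tau> z') = y"
        by metis
      have \<tau>inj: "inj_on \<tau> (Fib w)"
      proof (rule inj_onI)
        fix z1 z2 assume z12: "z1 \<in> Fib w" "z2 \<in> Fib w" "\<tau> z1 = \<tau> z2"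
        have "Uf z1 = Uf z2"
        proof (rule ccontr)
          assume "Uf z1 \<noteq> Uf z2"
          then have "disjnt (Uf z1) (Uf z2)" using disj Uf z12 unfolding pairwise_def by blast
          then show False using Uf z12 unfolding disjnt_def by auto
        qed
        moreover have "inj_on p (Uf z1)"
          using sheet_lemma(3)[OF _ Vco _ order_refl] sh Uf z12 by blast
        ultimately show "z1 = z2" using Uf z12 unfolding inj_on_def Fib_def by auto
      qed
      have \<tau>img: "\<tau> ` Fib w \<subseteq> Fib y"
      proof
        fix u assume "u \<in> \<tau> ` Fib w"
        then obtain z' where "z' \<in> Fib w" "u = \<tau> z'" by blast
        moreover have "Uf z' \<subseteq> topspace X" using sh Uf \<open>z' \<in> Fib w\<close> openin_subset by blast
        ultimately show "u \<in> Fib y" using Uf unfolding Fib_def by blast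
      qed
      have c1: "card (Fib w) \<le> card (Fib y)" using card_inj_on_le[OF \<tau>inj \<tau>img finy] .
      have c2: "card (\<sigma> ` Fib y) = card (Fib y)" using card_image[OF \<sigma>inj] .
      have c3: "card (\<sigma> ` Fib y) \<le> card (Fib w)" using card_mono[OF finw \<sigma>img] .
      have "\<sigma> ` Fib y = Fib w" using card_subset_eq[OF finw \<sigma>img] c1 c2 c3 by linarith
      moreover have "z \<in> Fib w" using z w_def Fib_def by simp
      ultimately obtain x' where x': "x' \<in> Fib y" "z = \<sigma> x'" by blast
      have px': "p x' = y" using x'(1) unfolding Fib_def by simp
      have "z \<in> G x'" using \<sigma> x' by simp
      then have "z \<in> A x'" unfolding A_def using wW px' w_def by simp
      then show "z \<in> \<Union>(A ` Fib y)" using x' by blast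
    qed
    show ?thesis
    proof (intro exI conjI)
      show "A ` Fib y \<subseteq> S" unfolding S_def Fib_def by blast
      show "\<Union>(A ` Fib y) = {z \<in> topspace X. p z \<in> p ` U}"
      proof
        show "\<Union>(A ` Fib y) \<subseteq> {z \<in> topspace X. p z \<in> p ` U}"
          using Aimg AX GX pU unfolding Fib_def by blast
        show "{z \<in> topspace X. p z \<in> p ` U} \<subseteq> \<Union>(A ` Fib y)" using covers pU by simp
      qed
      show "pairwise disjnt (A ` Fib y)"
      proof (rule pairwiseI)
        fix B1 B2 assume "B1 \<in> A ` Fib y" "B2 \<in> A ` Fib y" "B1 \<noteq> B2"
        then obtain x1 x2 where xx: "x1 \<in> Fib y" "x2 \<in> Fib y" "B1 = A x1" "B2 = A x2" "x1 \<noteq> x2"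
          by blast
        show "disjnt B1 B2"
          unfolding disjnt_def
        proof (rule ccontr)
          assume "B1 \<inter> B2 \<noteq> {}"
          then obtain z where "z \<in> A x1" "z \<in> A x2" using xx by blast
          then have zz: "z \<in> G x1" "z \<in> G x2" using AX by blast+
          have a: "x1 \<in> topspace X" "x2 \<in> topspace X" "p x1 = p x2" using xx(1,2) unfolding Fib_def by auto
          have "x1 = x2" using Ginj[OF a zz] .
          then show False using xx by blast
        qed
      qed
      show "\<forall>W \<in> A ` Fib y. homeomorphic_map (subtopology X W) (subtopology Y (p ` U)) p"
      proof
        fix B assume "B \<in> A ` Fib y"
        then obtain x' where x': "x' \<in> Fib y" "B = A x'" by blast
        have "x' \<in> topspace X" using x' Fib_def by simp
        then have "homeomorphic_map (subtopology X B) (subtopology Y (p ` B)) p" using Aprops x' by blast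
        moreover have "p ` B = p ` U" using Aimg x' pU by simp
        ultimately show "homeomorphic_map (subtopology X B) (subtopology Y (p ` U)) p" by simp
      qed
    qed
  qed
  have cs: "covering_structure X Y p S"
    unfolding covering_structure_def
  proof (intro conjI)
    show "\<Union>S = topspace X"
    proof
      show "\<Union>S \<subseteq> topspace X" unfolding S_def using AX GX by blast
      show "topspace X \<subseteq> \<Union>S" unfolding S_def using xA by blast
    qed
    show "\<forall>U\<in>S. slice X Y p U" unfolding S_def using Aprops by blast
    show "\<forall>U\<in>S. \<exists>\<U>\<subseteq>S. \<Union>\<U> = {x \<in> topspace X. p x \<in> p ` U} \<and> pairwise disjnt \<U> \<and>
          (\<forall>W\<in>\<U>. homeomorphic_map (subtopology X W) (subtopology Y (p ` U)) p)"
      using partition by blast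
  qed
  have "overlay_structure X Y p S" unfolding overlay_structure_def using cs starslice by blast
  then show ?thesis unfolding overlay_def by blast
qed

end
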